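(* Let $f : \mathbb{R}^{n_1} \times \mathbb{R}^{n_2} \to \mathbb{R}^{n_3}$, $(u,v) \mapsto u * v$, be a bilinear map. Then $Q(f)$ equals the maximal $r$ for which there exist $u_1,\ldots,u_r \in \mathbb{R}^{n_1}$ and $v_1,\ldots,v_r \in \mathbb{R}^{n_2}$ such that $u_1 * v_1, \ldots, u_r * v_r$ are linearly independent modulo the subspace $\langle \{ u_i * v_j \mid 1 \leq i,j \leq r,\ i \neq j\} \rangle_{\mathbb{R}}$.
   Context: For a bilinear map $f : \mathbb{R}^{n_1} \times \mathbb{R}^{n_2} \to \mathbb{R}^{n_3}$, its subrank $Q(f)$ is the largest $r$ such that there exist linear maps $\varphi_1 : \mathbb{R}^r \to \mathbb{R}^{n_1}$, $\varphi_2 : \mathbb{R}^r \to \mathbb{R}^{n_2}$, $\varphi_3 : \mathbb{R}^{n_3} \to \mathbb{R}^r$ with $\varphi_3(f(\varphi_1(a), \varphi_2(b))) = (a_1b_1,\ldots,a_rb_r)$ for all $a,b \in \mathbb{R}^r$. *)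

theory Defs
  imports "HOL-Analysis.Analysis"
begin

text \<open>Vectors of \<open>\<real>^r\<close> (r varies) are represented as \<open>a :: nat \<Rightarrow> real\<close>, only
  the coordinates \<open>a 0, ..., a (r-1)\<close> being relevant.  A linear map
  \<open>\<real>^r \<rightarrow> V\<close> is given by the images \<open>w 0, ..., w (r-1)\<close> of the standard basis,
  i.e. \<open>a \<mapsto> \<Sum>i<r. a i *\<^sub>R w i\<close>; a linear map \<open>V \<rightarrow> \<real>^r\<close> is given by its
  r linear coordinate functionals \<open>l 0, ..., l (r-1)\<close>.\<close>

definition subrank_witness ::
  "('a::real_vector \<Rightarrow> 'b::real_vector \<Rightarrow> 'c::real_vector) \<Rightarrow> nat \<Rightarrow> bool" where
  "subrank_witness f r \<longleftrightarrow>
     (\<exists>(w1 :: nat \<Rightarrow> 'a) (w2 :: nat \<Rightarrow> 'b) (l :: nat \<Rightarrow> 'c \<Rightarrow> real).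
        (\<forall>k<r. linear (l k)) \<and>
        (\<forall>(a :: nat \<Rightarrow> real) (b :: nat \<Rightarrow> real). \<forall>k<r.
           l k (f (\<Sum>i<r. a i *\<^sub>R w1 i) (\<Sum>j<r. b j *\<^sub>R w2 j)) = a k * b k))"

definition subrank ::
  "('a::real_vector \<Rightarrow> 'b::real_vector \<Rightarrow> 'c::real_vector) \<Rightarrow> nat" where
  "subrank f = (GREATEST r. subrank_witness f r)"

definition lin_indep_modulo :: "nat \<Rightarrow> (nat \<Rightarrow> 'c::real_vector) \<Rightarrow> 'c set \<Rightarrow> bool" where
  "lin_indep_modulo r x W \<longleftrightarrow>
     (\<forall>c :: nat \<Rightarrow> real. (\<Sum>i<r. c i *\<^sub>R x i) \<in> W \<longrightarrow> (\<forall>i<r. c i = 0))"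

definition diag_indep ::
  "('a::real_vector \<Rightarrow> 'b::real_vector \<Rightarrow> 'c::real_vector) \<Rightarrow> nat \<Rightarrow> bool" where
  "diag_indep f r \<longleftrightarrow>
     (\<exists>(u :: nat \<Rightarrow> 'a) (v :: nat \<Rightarrow> 'b).
        lin_indep_modulo r (\<lambda>i. f (u i) (v i))
          (span {f (u i) (v j) | i j. i < r \<and> j < r \<and> i \<noteq> j}))"

end

theory Submission
  imports Defs
begin

lemma expand:
  assumes f: "bilinear f" and l: "linear l"
  shows "l (f (\<Sum>i<r. a i *\<^sub>R u i) (\<Sum>j<r. b j *\<^sub>R v j))
         = (\<Sum>i<r. \<Sum>j<r. a i * b j * l (f (u i) (v j)))"
proof -
  have "f (\<Sum>i<r. a i *\<^sub>R u i) (\<Sum>j<r. b j *\<^sub>R v j)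
      = (\<Sum>(i,j)\<in>{..<r}\<times>{..<r}. f (a i *\<^sub>R u i) (b j *\<^sub>R v j))"
    by (rule bilinear_sum[OF f])
  also have "\<dots> = (\<Sum>i<r. \<Sum>j<r. f (a i *\<^sub>R u i) (b j *\<^sub>R v j))"
    by (rule sum.cartesian_product[symmetric])
  also have "\<dots> = (\<Sum>i<r. \<Sum>j<r. (a i * b j) *\<^sub>R f (u i) (v j))"
    by (intro sum.cong refl) (simp add: bilinear_lmul[OF f] bilinear_rmul[OF f] mult.commute)
  finally have e: "f (\<Sum>i<r. a i *\<^sub>R u i) (\<Sum>j<r. b j *\<^sub>R v j)
      = (\<Sum>i<r. \<Sum>j<r. (a i * b j) *\<^sub>R f (u i) (v j))" .
  show ?thesis
    unfolding e linear_sum[OF l] linear_scale[OF l] by (intro sum.cong refl) simp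
qed

lemma sum_ind:
  fixes g :: "nat \<Rightarrow> 'a::real_vector"
  assumes "finite A"
  shows "(\<Sum>i\<in>A. (if i = j then 1 else 0) *\<^sub>R g i) = (if j \<in> A then g j else 0)"
proof -
  have "(\<Sum>i\<in>A. (if i = j then 1 else 0) *\<^sub>R g i) = (\<Sum>i\<in>A. if i = j then g i else 0)"
    by (rule sum.cong) auto
  then show ?thesis using assms by (simp add: sum.delta')
qed

lemma functional:
  fixes x :: "'c::euclidean_space"
  assumes "x \<notin> span S"
  shows "\<exists>g :: 'c \<Rightarrow> real. linear g \<and> g x = 1 \<and> (\<forall>y\<in>span S. g y = 0)"
proof -
  obtain B where B: "B \<subseteq> span S" "independent B" "span S \<subseteq> span B"
    "card B = dim (span S)"
    by (rule basis_exists)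
  have "span B \<subseteq> span S"
    using B(1) by (rule span_minimal) (rule subspace_span)
  then have sB: "span B = span S" using B(3) by (rule antisym)
  have xB: "x \<notin> span B" using sB assms by simp
  have ind: "independent (insert x B)" by (rule independent_insertI[OF xB B(2)])
  obtain g :: "'c \<Rightarrow> real" where g: "linear g" "\<forall>z\<in>insert x B. g z = (if z = x then 1 else 0)"
    using linear_independent_extend[OF ind, where f="\<lambda>z. if z = x then 1 else 0"] by blast
  have z0: "g z = 0" if "z \<in> B" for z
  proof -
    have "z \<in> span B" using that by (rule span_base)
    then have "z \<noteq> x" using xB by blast
    then show ?thesis using g(2) that by simp
  qed
  have "g y = 0" if "y \<in> span S" for y
    using linear_eq_0_on_span[OF g(1) z0] that sB by blast
  moreover have "g x = 1" using g(2) by simp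
  ultimately show ?thesis using g(1) by blast
qed

lemma equiv:
  fixes f :: "'a::euclidean_space \<Rightarrow> 'b::euclidean_space \<Rightarrow> 'c::euclidean_space"
  assumes f: "bilinear f"
  shows "subrank_witness f r \<longleftrightarrow> diag_indep f r"
proof
  assume "subrank_witness f r"
  then obtain w1 w2 l where lin: "\<forall>k<r. linear (l k)" and
    H: "\<forall>(a :: nat \<Rightarrow> real) (b :: nat \<Rightarrow> real). \<forall>k<r.
           l k (f (\<Sum>i<r. a i *\<^sub>R w1 i) (\<Sum>j<r. b j *\<^sub>R w2 j)) = a k * b k"
    unfolding subrank_witness_def by (elim exE conjE) (rule that; assumption)
  have val: "l k (f (w1 i) (w2 j)) = (if k = i \<and> k = j then 1 else 0)"
    if "k < r" "i < r" "j < r" for k i j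
  proof -
    define A :: "nat \<Rightarrow> real" where "A = (\<lambda>i'. if i' = i then 1 else 0)"
    define B :: "nat \<Rightarrow> real" where "B = (\<lambda>i'. if i' = j then 1 else 0)"
    have e1: "(\<Sum>i'<r. A i' *\<^sub>R w1 i') = w1 i"
      unfolding A_def using that by (simp only: sum_ind finite_lessThan lessThan_iff if_True)
    have e2: "(\<Sum>i'<r. B i' *\<^sub>R w2 i') = w2 j"
      unfolding B_def using that by (simp only: sum_ind finite_lessThan lessThan_iff if_True)
    have "l k (f (w1 i) (w2 j)) = A k * B k"
      using H[rule_format, where a=A and b=B, OF that(1)] unfolding e1 e2 .
    then show ?thesis unfolding A_def B_def by simp
  qed
  show "diag_indep f r"
    unfolding diag_indep_def lin_indep_modulo_def
  proof (intro exI[of _ w1] exI[of _ w2] allI impI)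
    fix c :: "nat \<Rightarrow> real" and k
    assume mem: "(\<Sum>i<r. c i *\<^sub>R f (w1 i) (w2 i)) \<in> span {f (w1 i) (w2 j) |i j. i < r \<and> j < r \<and> i \<noteq> j}"
      and k: "k < r"
    have lk: "linear (l k)" using lin k by blast
    have z0: "l k z = 0" if "z \<in> {f (w1 i) (w2 j) |i j. i < r \<and> j < r \<and> i \<noteq> j}" for z
    proof -
      from that obtain i j where "i < r" "j < r" "i \<noteq> j" "z = f (w1 i) (w2 j)" by blast
      then show ?thesis using val k by simp
    qed
    have "l k (\<Sum>i<r. c i *\<^sub>R f (w1 i) (w2 i)) = 0"
      by (rule linear_eq_0_on_span[OF lk z0 mem])
    moreover have "l k (\<Sum>i<r. c i *\<^sub>R f (w1 i) (w2 i)) = (\<Sum>i<r. c i * (if k = i then 1 else 0))"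
      using val k by (simp add: linear_sum[OF lk] linear_scale[OF lk])
    moreover have "(\<Sum>i<r. c i * (if k = i then 1 else 0)) = c k"
      using k by (simp add: if_distrib sum.delta cong: if_cong)
    ultimately show "c k = 0" by simp
  qed
next
  assume "diag_indep f r"
  then obtain u v where ind: "lin_indep_modulo r (\<lambda>i. f (u i) (v i))
          (span {f (u i) (v j) | i j. i < r \<and> j < r \<and> i \<noteq> j})"
    unfolding diag_indep_def by (elim exE) (rule that)
  define W where "W = {f (u i) (v j) | i j. i < r \<and> j < r \<and> i \<noteq> j}"
  define S where "S k = W \<union> {f (u i) (v i) | i. i < r \<and> i \<noteq> k}" for k
  define x where "x i = f (u i) (v i)" for i
  have notin: "x k \<notin> span (S k)" if k: "k < r" for k
  proof
    assume xin: "x k \<in> span (S k)"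
    define I where "I = {..<r} - {k}"
    define T where "T = {s + (\<Sum>i\<in>I. d i *\<^sub>R x i) | s d. s \<in> span W}"
    have subT: "subspace T"
      unfolding subspace_def T_def
    proof (intro conjI ballI allI)
      show "0 \<in> {s + (\<Sum>i\<in>I. d i *\<^sub>R x i) |s d. s \<in> span W}"
        by (rule CollectI, rule exI[of _ 0], rule exI[of _ "\<lambda>_. 0"]) (simp add: span_zero)
    next
      fix y z assume "y \<in> {s + (\<Sum>i\<in>I. d i *\<^sub>R x i) |s d. s \<in> span W}"
        "z \<in> {s + (\<Sum>i\<in>I. d i *\<^sub>R x i) |s d. s \<in> span W}"
      then obtain s1 d1 s2 d2 where "y = s1 + (\<Sum>i\<in>I. d1 i *\<^sub>R x i)" "s1 \<in> span W"
        "z = s2 + (\<Sum>i\<in>I. d2 i *\<^sub>R x i)" "s2 \<in> span W" by blast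
      then show "y + z \<in> {s + (\<Sum>i\<in>I. d i *\<^sub>R x i) |s d. s \<in> span W}"
        by (intro CollectI exI[of _ "s1 + s2"] exI[of _ "\<lambda>i. d1 i + d2 i"])
           (simp add: span_add scaleR_add_left sum.distrib algebra_simps)
    next
      fix c :: real and y assume "y \<in> {s + (\<Sum>i\<in>I. d i *\<^sub>R x i) |s d. s \<in> span W}"
      then obtain s1 d1 where "y = s1 + (\<Sum>i\<in>I. d1 i *\<^sub>R x i)" "s1 \<in> span W" by blast
      then show "c *\<^sub>R y \<in> {s + (\<Sum>i\<in>I. d i *\<^sub>R x i) |s d. s \<in> span W}"
        by (intro CollectI exI[of _ "c *\<^sub>R s1"] exI[of _ "\<lambda>i. c * d1 i"])
           (simp add: span_scale scaleR_add_right scaleR_sum_right)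
    qed
    have "S k \<subseteq> T"
    proof
      fix y assume "y \<in> S k"
      then consider "y \<in> W" | i where "i < r" "i \<noteq> k" "y = x i"
        unfolding S_def x_def by blast
      then show "y \<in> T"
      proof cases
        case 1
        then show ?thesis unfolding T_def
          by (intro CollectI exI[of _ y] exI[of _ "\<lambda>_. 0"]) (simp add: span_base)
      next
        case (2 i)
        then have "i \<in> I" unfolding I_def by auto
        then have "(\<Sum>j\<in>I. (if j = i then 1 else 0) *\<^sub>R x j) = x i"
          unfolding I_def by (simp add: sum_ind)
        then show ?thesis unfolding T_def using 2
          by (intro CollectI exI[of _ 0] exI[of _ "\<lambda>j. if j = i then 1 else 0"]) (simp add: span_zero)
      qed
    qed
    then have "span (S k) \<subseteq> T" using subT by (rule span_minimal)
    then obtain s d where s: "s \<in> span W" and eq: "x k = s + (\<Sum>i\<in>I. d i *\<^sub>R x i)"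
      using xin unfolding T_def by blast
    define c where "c i = (if i = k then 1 else - d i)" for i
    have "(\<Sum>i<r. c i *\<^sub>R x i) = c k *\<^sub>R x k + (\<Sum>i\<in>I. c i *\<^sub>R x i)"
      unfolding I_def using k by (simp add: sum.remove)
    also have "\<dots> = x k - (\<Sum>i\<in>I. d i *\<^sub>R x i)"
      unfolding c_def I_def by (simp add: sum_negf)
    also have "\<dots> = s" using eq by simp
    finally have "(\<Sum>i<r. c i *\<^sub>R x i) \<in> span W" using s by simp
    then have "c k = 0" using ind k unfolding lin_indep_modulo_def W_def x_def by blast
    then show False unfolding c_def by simp
  qed
  define l where "l k = (SOME g :: 'c \<Rightarrow> real. linear g \<and> g (x k) = 1 \<and> (\<forall>y\<in>span (S k). g y = 0))" for k
  have lk: "linear (l k) \<and> l k (x k) = 1 \<and> (\<forall>y\<in>span (S k). l k y = 0)" if "k < r" for k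
    unfolding l_def using functional[OF notin[OF that]] by (rule someI_ex)
  have val: "l k (f (u i) (v j)) = (if k = i \<and> k = j then 1 else 0)"
    if "k < r" "i < r" "j < r" for k i j
  proof (cases "i = j")
    case True
    show ?thesis
    proof (cases "i = k")
      case True
      then show ?thesis using lk[OF that(1)] \<open>i = j\<close> unfolding x_def by simp
    next
      case False
      then have "f (u i) (v j) \<in> span (S k)"
        using \<open>i = j\<close> that by (intro span_base) (auto simp: S_def)
      then show ?thesis using lk[OF that(1)] False by auto
    qed
  next
    case False
    then have "f (u i) (v j) \<in> span (S k)"
      using that by (intro span_base) (auto simp: S_def W_def)
    then show ?thesis using lk[OF that(1)] False by auto
  qed
  show "subrank_witness f r"
    unfolding subrank_witness_def
  proof (intro exI[of _ u] exI[of _ v] exI[of _ l] conjI allI impI)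
    fix k assume "k < r" then show "linear (l k)" using lk by blast
  next
    fix a b :: "nat \<Rightarrow> real" and k assume k: "k < r"
    have "l k (f (\<Sum>i<r. a i *\<^sub>R u i) (\<Sum>j<r. b j *\<^sub>R v j))
         = (\<Sum>i<r. \<Sum>j<r. a i * b j * l k (f (u i) (v j)))"
      using expand[OF f] lk[OF k] by blast
    also have "\<dots> = (\<Sum>i<r. \<Sum>j<r. a i * b j * (if k = i \<and> k = j then 1 else 0))"
      using val k by simp
    also have "\<dots> = (\<Sum>i<r. if k = i then a i * b k else 0)"
    proof (rule sum.cong)
      fix i assume "i \<in> {..<r}"
      show "(\<Sum>j<r. a i * b j * (if k = i \<and> k = j then 1 else 0)) = (if k = i then a i * b k else 0)"
        using k by (cases "k = i") (simp_all add: if_distrib sum.delta cong: if_cong)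
    qed simp
    also have "\<dots> = a k * b k"
      using k by (simp add: sum.delta)
    finally show "l k (f (\<Sum>i<r. a i *\<^sub>R u i) (\<Sum>j<r. b j *\<^sub>R v j)) = a k * b k" .
  qed
qed

theorem proposition5p1:
  fixes f :: "real ^ 'n1 \<Rightarrow> real ^ 'n2 \<Rightarrow> real ^ 'n3"
  assumes "bilinear f"
  shows "subrank f = (GREATEST r. diag_indep f r)"
proof -
  have "subrank_witness f = diag_indep f"
    using equiv[OF assms] by (intro ext) blast
  then show ?thesis unfolding subrank_def by simp
qed

end
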